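(* Let $M$ be a $3$-connected matroid and let $C^*$ be a $4$-element cocircuit of $M$. If there are distinct elements $c',c''\in C^*$ such that neither $c'$ nor $c''$ is in a triangle of $M$, then $M/c$ is $3$-connected for some $c\in C^*$. *)

theory Defs
  imports Main
begin

definition matroid :: "'a set \<Rightarrow> ('a set \<Rightarrow> bool) \<Rightarrow> bool" where
  "matroid E indep \<longleftrightarrow>
     finite E \<and> indep {} \<and>
     (\<forall>I. indep I \<longrightarrow> I \<subseteq> E) \<and>
     (\<forall>I J. indep J \<and> I \<subseteq> J \<longrightarrow> indep I) \<and>
     (\<forall>I J. indep I \<and> indep J \<and> card I < card J \<longrightarrow> (\<exists>x \<in> J - I. indep (insert x I)))"

definition rk :: "('a set \<Rightarrow> bool) \<Rightarrow> 'a set \<Rightarrow> nat" where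
  "rk indep X = Max {card I | I. I \<subseteq> X \<and> indep I}"

definition basis :: "'a set \<Rightarrow> ('a set \<Rightarrow> bool) \<Rightarrow> 'a set \<Rightarrow> bool" where
  "basis E indep B \<longleftrightarrow> indep B \<and> (\<forall>x \<in> E - B. \<not> indep (insert x B))"

definition circuit :: "'a set \<Rightarrow> ('a set \<Rightarrow> bool) \<Rightarrow> 'a set \<Rightarrow> bool" where
  "circuit E indep C \<longleftrightarrow> C \<subseteq> E \<and> \<not> indep C \<and> (\<forall>D. D \<subset> C \<longrightarrow> indep D)"

definition dual_indep :: "'a set \<Rightarrow> ('a set \<Rightarrow> bool) \<Rightarrow> 'a set \<Rightarrow> bool" where
  "dual_indep E indep I \<longleftrightarrow> I \<subseteq> E \<and> (\<exists>B. basis E indep B \<and> I \<inter> B = {})"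

definition cocircuit :: "'a set \<Rightarrow> ('a set \<Rightarrow> bool) \<Rightarrow> 'a set \<Rightarrow> bool" where
  "cocircuit E indep C \<longleftrightarrow> circuit E (dual_indep E indep) C"

definition triangle :: "'a set \<Rightarrow> ('a set \<Rightarrow> bool) \<Rightarrow> 'a set \<Rightarrow> bool" where
  "triangle E indep T \<longleftrightarrow> circuit E indep T \<and> card T = 3"

definition in_triangle :: "'a set \<Rightarrow> ('a set \<Rightarrow> bool) \<Rightarrow> 'a \<Rightarrow> bool" where
  "in_triangle E indep e \<longleftrightarrow> (\<exists>T. triangle E indep T \<and> e \<in> T)"

text \<open>Contraction M/c (ground set E - {c}); if c is a loop, M/c = M\c.\<close>
definition contract_indep :: "('a set \<Rightarrow> bool) \<Rightarrow> 'a \<Rightarrow> 'a set \<Rightarrow> bool" where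
  "contract_indep indep c I \<longleftrightarrow> c \<notin> I \<and>
     (if indep {c} then indep (insert c I) else indep I)"

definition separation :: "nat \<Rightarrow> 'a set \<Rightarrow> ('a set \<Rightarrow> bool) \<Rightarrow> 'a set \<Rightarrow> bool" where
  "separation k E indep X \<longleftrightarrow> X \<subseteq> E \<and> card X \<ge> k \<and> card (E - X) \<ge> k \<and>
     int (rk indep X) + int (rk indep (E - X)) - int (rk indep E) < int k"

definition n_connected :: "nat \<Rightarrow> 'a set \<Rightarrow> ('a set \<Rightarrow> bool) \<Rightarrow> bool" where
  "n_connected n E indep \<longleftrightarrow> (\<forall>k X. 1 \<le> k \<and> k < n \<longrightarrow> \<not> separation k E indep X)"

end

theory Submission imports Defs begin

lemma rk_eqI:
  assumes "\<exists>I. I \<subseteq> X \<and> P I \<and> card I = n"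
    and "\<And>I. I \<subseteq> X \<Longrightarrow> P I \<Longrightarrow> card I \<le> n"
  shows "rk P X = n"
proof -
  let ?S = "{card I | I. I \<subseteq> X \<and> P I}"
  have fin: "finite ?S" by (rule finite_subset[of _ "{..n}"]) (auto intro: assms(2))
  have "n \<in> ?S" using assms(1) by auto
  moreover have "\<forall>y\<in>?S. y \<le> n" using assms(2) by auto
  ultimately show ?thesis unfolding rk_def using fin by (intro Max_eqI) auto
qed

locale mat =
  fixes E :: "'a set" and indep :: "'a set \<Rightarrow> bool"
  assumes mat: "matroid E indep"
begin

lemma finE: "finite E" using mat unfolding matroid_def by auto
lemma indep_empty: "indep {}" using mat unfolding matroid_def by auto
lemma indep_E: "indep I \<Longrightarrow> I \<subseteq> E" using mat unfolding matroid_def by auto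
lemma indep_sub: "indep J \<Longrightarrow> I \<subseteq> J \<Longrightarrow> indep I" using mat unfolding matroid_def by blast
lemma augment: "indep I \<Longrightarrow> indep J \<Longrightarrow> card I < card J \<Longrightarrow> \<exists>x\<in>J - I. indep (insert x I)"
  using mat unfolding matroid_def by auto
lemma indep_fin: "indep I \<Longrightarrow> finite I" using indep_E finE finite_subset by blast
lemma indep_card: "indep I \<Longrightarrow> card I \<le> card E" using indep_E finE card_mono by blast

abbreviation r where "r \<equiv> rk indep"

lemma rk_fin: "finite {card I | I. I \<subseteq> X \<and> indep I}"
  by (rule finite_subset[of _ "{..card E}"]) (auto intro: indep_card)

lemma rk_ge: "indep I \<Longrightarrow> I \<subseteq> X \<Longrightarrow> card I \<le> r X"
  unfolding rk_def using rk_fin by (intro Max_ge) auto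

lemma rk_obtain: "\<exists>I. I \<subseteq> X \<and> indep I \<and> card I = r X"
proof -
  have "r X \<in> {card I | I. I \<subseteq> X \<and> indep I}"
    unfolding rk_def using rk_fin indep_empty by (intro Max_in) auto
  then show ?thesis by auto
qed

lemma extend: "indep I \<Longrightarrow> I \<subseteq> X \<Longrightarrow> \<exists>J. I \<subseteq> J \<and> J \<subseteq> X \<and> indep J \<and> card J = r X"
proof (induction "r X - card I" arbitrary: I rule: less_induct)
  case less
  have le: "card I \<le> r X" using rk_ge less by auto
  show ?case
  proof (cases "card I = r X")
    case True then show ?thesis using less by auto
  next
    case False
    obtain K where K: "K \<subseteq> X" "indep K" "card K = r X" using rk_obtain by blast
    with False le obtain z where z: "z \<in> K - I" "indep (insert z I)" using augment[OF less(2) K(2)] by force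
    have fi: "finite I" using less indep_fin by auto
    have c: "card (insert z I) = card I + 1" using z fi by auto
    have "r X - card (insert z I) < r X - card I" using c False le by auto
    from less(1)[OF this z(2)] z K less(3) obtain J where "insert z I \<subseteq> J \<and> J \<subseteq> X \<and> indep J \<and> card J = r X" by auto
    then show ?thesis by auto
  qed
qed

lemma rk_mono: "X \<subseteq> Y \<Longrightarrow> r X \<le> r Y"
proof -
  assume XY: "X \<subseteq> Y"
  obtain I where I: "I \<subseteq> X" "indep I" "card I = r X" using rk_obtain by blast
  have "I \<subseteq> Y" using I XY by blast
  then have "card I \<le> r Y" using rk_ge I(2) by blast
  then show ?thesis using I by simp
qed

lemma rk_empty: "r {} = 0"
proof -
  obtain I where I: "I \<subseteq> {}" "indep I" "card I = r {}" using rk_obtain by blast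
  then show ?thesis by simp
qed

lemma rk_le_card: "finite X \<Longrightarrow> r X \<le> card X"
proof -
  assume f: "finite X"
  obtain I where I: "I \<subseteq> X" "indep I" "card I = r X" using rk_obtain by blast
  then show ?thesis using card_mono[OF f I(1)] by simp
qed

lemma rk_insert: "r (insert x X) \<le> r X + 1"
proof -
  obtain J where J: "J \<subseteq> insert x X" "indep J" "card J = r (insert x X)" using rk_obtain by blast
  have "J - {x} \<subseteq> X" using J by auto
  moreover have "indep (J - {x})" using J indep_sub by blast
  ultimately have "card (J - {x}) \<le> r X" using rk_ge by blast
  moreover have "card J \<le> card (J - {x}) + 1"
    by (cases "card J") (simp_all add: card_Diff_singleton_if)
  ultimately show ?thesis using J by auto
qed

lemma submod: "r (X \<union> Y) + r (X \<inter> Y) \<le> r X + r Y"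
proof -
  obtain I where I: "I \<subseteq> X \<inter> Y" "indep I" "card I = r (X \<inter> Y)" using rk_obtain by blast
  have IXY: "I \<subseteq> X \<union> Y" using I(1) by blast
  obtain J where J: "I \<subseteq> J" "J \<subseteq> X \<union> Y" "indep J" "card J = r (X \<union> Y)"
    using extend[OF I(2) IXY] by blast
  have fJ: "finite J" using indep_fin[OF J(3)] .
  have iX: "indep (J \<inter> X)" by (rule indep_sub[OF J(3)]) simp
  have iY: "indep (J \<inter> Y)" by (rule indep_sub[OF J(3)]) simp
  have iXY: "indep (J \<inter> X \<inter> Y)" by (rule indep_sub[OF J(3)]) blast
  have c1: "card (J \<inter> X) \<le> r X" by (rule rk_ge[OF iX]) simp
  have c2: "card (J \<inter> Y) \<le> r Y" by (rule rk_ge[OF iY]) simp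
  have c3: "card (J \<inter> X \<inter> Y) \<le> r (X \<inter> Y)" by (rule rk_ge[OF iXY]) blast
  have fX: "finite (J \<inter> X)" using fJ by simp
  have fY: "finite (J \<inter> Y)" using fJ by simp
  have u: "(J \<inter> X) \<union> (J \<inter> Y) = J" using J(2) by blast
  have i: "(J \<inter> X) \<inter> (J \<inter> Y) = J \<inter> X \<inter> Y" by blast
  have "card (J \<inter> X) + card (J \<inter> Y) = card ((J \<inter> X) \<union> (J \<inter> Y)) + card ((J \<inter> X) \<inter> (J \<inter> Y))"
    using card_Un_Int[OF fX fY] .
  then have c4: "card (J \<inter> X) + card (J \<inter> Y) = card J + card (J \<inter> X \<inter> Y)" unfolding u i .
  have "I \<subseteq> J \<inter> X \<inter> Y" using I(1) J(1) by blast
  then have "card I \<le> card (J \<inter> X \<inter> Y)" using fJ by (intro card_mono) auto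
  then have c5: "card (J \<inter> X \<inter> Y) = r (X \<inter> Y)" using c3 I(3) by linarith
  show ?thesis using c1 c2 c4 c5 J(4) by linarith
qed

lemma indep_iff: "finite X \<Longrightarrow> indep X \<longleftrightarrow> r X = card X"
proof
  assume f: "finite X" and i: "indep X"
  have "card X \<le> r X" using rk_ge[OF i] by blast
  moreover have "r X \<le> card X" using rk_le_card[OF f] .
  ultimately show "r X = card X" by simp
next
  assume f: "finite X" and e: "r X = card X"
  obtain I where I: "I \<subseteq> X" "indep I" "card I = r X" using rk_obtain by blast
  then have "I = X" using card_subset_eq[OF f I(1)] e by simp
  then show "indep X" using I by simp
qed


lemma rk_subE: "r X = r (X \<inter> E)"
proof -
  obtain I where I: "I \<subseteq> X" "indep I" "card I = r X" using rk_obtain by blast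
  then have "I \<subseteq> X \<inter> E" using indep_E by auto
  then have "card I \<le> r (X \<inter> E)" using rk_ge[OF I(2)] by blast
  then have "r X \<le> r (X \<inter> E)" using I(3) by simp
  moreover have "r (X \<inter> E) \<le> r X" by (rule rk_mono) auto
  ultimately show ?thesis by simp
qed

lemma rk_E_ge: "r X \<le> r E"
  using rk_subE[of X] rk_mono[of "X \<inter> E" E] by auto

lemma cl_mono: "r (insert e S) = r S \<Longrightarrow> S \<subseteq> T \<Longrightarrow> r (insert e T) = r T"
proof -
  assume a: "r (insert e S) = r S" "S \<subseteq> T"
  have "r (insert e S \<union> T) + r (insert e S \<inter> T) \<le> r (insert e S) + r T" by (rule submod)
  moreover have "insert e S \<union> T = insert e T" using a by auto
  ultimately have "r (insert e T) + r (insert e S \<inter> T) \<le> r (insert e S) + r T" by simp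
  moreover have "r S \<le> r (insert e S \<inter> T)" using a by (intro rk_mono) auto
  moreover have "r T \<le> r (insert e T)" by (rule rk_mono) auto
  ultimately show ?thesis using a(1) by linarith
qed

lemma cl_union: "r (insert e S) = r S \<Longrightarrow> S \<subseteq> T \<Longrightarrow> r (insert e T \<union> U) = r (T \<union> U)"
  using cl_mono[of e S "T \<union> U"] by auto

lemma basis_card: "basis E indep B \<Longrightarrow> card B = r E"
proof -
  assume b: "basis E indep B"
  then have iB: "indep B" unfolding basis_def by auto
  have le: "card B \<le> r E" using iB indep_E rk_ge by blast
  obtain K where K: "K \<subseteq> E" "indep K" "card K = r E" using rk_obtain by blast
  show ?thesis
  proof (rule ccontr)
    assume "card B \<noteq> r E"
    then have "card B < card K" using le K by auto
    then obtain z where "z \<in> K - B" "indep (insert z B)" using augment[OF iB K(2)] by blast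
    then show False using b K unfolding basis_def by auto
  qed
qed

lemma card_basis: "indep J \<Longrightarrow> card J = r E \<Longrightarrow> basis E indep J"
  unfolding basis_def
proof (intro conjI ballI notI)
  fix z assume a: "indep J" "card J = r E" "z \<in> E - J" "indep (insert z J)"
  then have "card (insert z J) \<le> r E" using indep_E rk_ge by blast
  moreover have "card (insert z J) = card J + 1" using a indep_fin by auto
  ultimately show False using a by auto
qed auto

lemma cocircuit_CC:
  assumes cc: "cocircuit E indep Cs" and e: "e \<in> Cs" and S: "S \<subseteq> E - Cs"
  shows "r (insert e S) = r S + 1"
proof (rule ccontr)
  assume "r (insert e S) \<noteq> r S + 1"
  moreover have "r S \<le> r (insert e S)" by (rule rk_mono) auto
  moreover have "r (insert e S) \<le> r S + 1" by (rule rk_insert)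
  ultimately have eq: "r (insert e S) = r S" by linarith
  have ci: "Cs \<subseteq> E" "\<not> dual_indep E indep Cs" "\<forall>D. D \<subset> Cs \<longrightarrow> dual_indep E indep D"
    using cc unfolding cocircuit_def circuit_def by auto
  have "Cs - {e} \<subset> Cs" using e by auto
  then have "dual_indep E indep (Cs - {e})" using ci by auto
  then obtain B where B: "basis E indep B" "(Cs - {e}) \<inter> B = {}" unfolding dual_indep_def by auto
  have iB: "indep B" using B unfolding basis_def by auto
  have "B \<subseteq> insert e (E - Cs)" using B indep_E[OF iB] by auto
  then have "card B \<le> r (insert e (E - Cs))" using iB rk_ge by blast
  moreover have "r (insert e (E - Cs)) = r (E - Cs)" using cl_mono[OF eq S] .
  ultimately have "r E \<le> r (E - Cs)" using basis_card[OF B(1)] by auto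
  then have "r (E - Cs) = r E" using rk_E_ge[of "E - Cs"] by auto
  then obtain J where J: "J \<subseteq> E - Cs" "indep J" "card J = r E" using rk_obtain by metis
  then have "basis E indep J" using card_basis by auto
  then have "dual_indep E indep Cs" unfolding dual_indep_def using ci J by auto
  then show False using ci by auto
qed

lemma rk_contract:
  assumes c: "indep {c}" and Z: "c \<notin> Z"
  shows "rk (contract_indep indep c) Z = r (insert c Z) - 1"
proof (rule rk_eqI)
  have cZ: "{c} \<subseteq> insert c Z" by blast
  obtain J where J: "{c} \<subseteq> J" "J \<subseteq> insert c Z" "indep J" "card J = r (insert c Z)"
    using extend[OF c cZ] by blast
  have fJ: "finite J" using J indep_fin by auto
  have "J - {c} \<subseteq> Z" using J by auto
  moreover have "contract_indep indep c (J - {c})" unfolding contract_indep_def using c J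
    by (simp add: insert_absorb)
  moreover have "card (J - {c}) = r (insert c Z) - 1" using J fJ by (simp add: card_Diff_singleton)
  ultimately show "\<exists>I. I \<subseteq> Z \<and> contract_indep indep c I \<and> card I = r (insert c Z) - 1" by blast
next
  fix I assume I: "I \<subseteq> Z" "contract_indep indep c I"
  then have ci: "c \<notin> I" "indep (insert c I)" unfolding contract_indep_def using c by auto
  then have "card (insert c I) \<le> r (insert c Z)" using I by (intro rk_ge) auto
  moreover have "card (insert c I) = card I + 1" using ci indep_fin[OF ci(2)] by auto
  ultimately show "card I \<le> r (insert c Z) - 1" by auto
qed

end

locale m3 = mat +
  fixes Cs :: "'a set"
  assumes conn: "n_connected 3 E indep"
    and cc: "cocircuit E indep Cs" and card4: "card Cs = 4"
begin

lemma CsE: "Cs \<subseteq> E" using cc unfolding cocircuit_def circuit_def by auto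
lemma cardE: "card E \<ge> 4" using card_mono[OF finE CsE] card4 by auto

lemma conn_k:
  assumes "X \<subseteq> E" "1 \<le> k" "k < 3" "card X \<ge> k" "card (E - X) \<ge> k"
  shows "r X + r (E - X) \<ge> r E + k"
proof -
  have "\<not> separation k E indep X" using conn assms unfolding n_connected_def by blast
  then have "\<not> (int (r X) + int (r (E - X)) - int (r E) < int k)" using assms unfolding separation_def by blast
  then show ?thesis by linarith
qed

lemma conn2: "X \<subseteq> E \<Longrightarrow> card X \<ge> 2 \<Longrightarrow> card (E - X) \<ge> 2 \<Longrightarrow> r X + r (E - X) \<ge> r E + 2"
  using conn_k[of X 2] by auto
lemma conn1: "X \<subseteq> E \<Longrightarrow> card X \<ge> 1 \<Longrightarrow> card (E - X) \<ge> 1 \<Longrightarrow> r X + r (E - X) \<ge> r E + 1"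
  using conn_k[of X 1] by auto

lemma card_compl: "X \<subseteq> E \<Longrightarrow> card (E - X) = card E - card X"
  using finE by (simp add: card_Diff_subset finite_subset)

lemma pair_rk: "u \<in> E \<Longrightarrow> v \<in> E \<Longrightarrow> u \<noteq> v \<Longrightarrow> r {u, v} = 2 \<and> r (E - {u, v}) = r E"
proof -
  assume a: "u \<in> E" "v \<in> E" "u \<noteq> v"
  have "card (E - {u,v}) \<ge> 2" using card_compl[of "{u,v}"] a cardE by auto
  then have "r {u,v} + r (E - {u,v}) \<ge> r E + 2" using a by (intro conn2) auto
  moreover have "r {u,v} \<le> 2" using rk_le_card[of "{u,v}"] a by auto
  moreover have "r (E - {u,v}) \<le> r E" by (rule rk_mono) auto
  ultimately show ?thesis by auto
qed

lemma pair_indep: "u \<in> E \<Longrightarrow> v \<in> E \<Longrightarrow> u \<noteq> v \<Longrightarrow> indep {u, v}"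
  using pair_rk indep_iff by auto

lemma single_indep: "u \<in> E \<Longrightarrow> indep {u}"
proof -
  assume u: "u \<in> E"
  have "card (E - {u}) \<ge> 3" using card_compl[of "{u}"] u cardE by auto
  then have "E - {u} \<noteq> {}" by (metis card.empty not_numeral_le_zero)
  then obtain v where "v \<in> E" "v \<noteq> u" by auto
  then show ?thesis using pair_indep[of u v] u indep_sub by blast
qed

lemma rk_single: "u \<in> E \<Longrightarrow> r {u} = 1"
  using single_indep indep_iff by fastforce

lemma spanE1: "u \<in> E \<Longrightarrow> r (E - {u}) = r E"
proof -
  assume u: "u \<in> E"
  have "card (E - {u}) \<ge> 1" using card_compl[of "{u}"] u cardE by auto
  then have "r {u} + r (E - {u}) \<ge> r E + 1" using u by (intro conn1) auto
  moreover have "r {u} \<le> 1" using rk_le_card[of "{u}"] by auto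
  moreover have "r (E - {u}) \<le> r E" by (rule rk_mono) auto
  ultimately show ?thesis by auto
qed

lemma spanE2: "u \<in> E \<Longrightarrow> v \<in> E \<Longrightarrow> r (E - {u, v}) = r E"
proof (cases "u = v")
  case True
  assume "u \<in> E" then show ?thesis using spanE1 True by auto
next
  case False
  assume "u \<in> E" "v \<in> E" then show ?thesis using pair_rk False by auto
qed


definition vsep :: "'a \<Rightarrow> 'a set \<Rightarrow> bool" where
  "vsep c X \<longleftrightarrow> X \<subseteq> E - {c} \<and> 2 \<le> card X \<and> 2 \<le> card (E - {c} - X) \<and>
     r (insert c X) + r (E - X) \<le> r E + 2"

lemma vsep_sym:
  assumes c: "c \<in> E" and v: "vsep c X"
  shows "vsep c (E - {c} - X)"
proof -
  have X: "X \<subseteq> E - {c}" using v unfolding vsep_def by blast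
  have e1: "E - {c} - (E - {c} - X) = X" using X by blast
  have e2: "insert c (E - {c} - X) = E - X" using X c by blast
  have e3: "E - (E - {c} - X) = insert c X" using X c by blast
  show ?thesis using v unfolding vsep_def e1 e2 e3 by auto
qed

lemma vsepD:
  assumes c: "c \<in> E" and v: "vsep c X"
  shows "r (insert c X) = r X" "r (E - X) = r (E - {c} - X)" "r X + r (E - {c} - X) = r E + 2"
proof -
  have X: "X \<subseteq> E - {c}" and cX: "2 \<le> card X" and cY: "2 \<le> card (E - {c} - X)"
    and s: "r (insert c X) + r (E - X) \<le> r E + 2" using v unfolding vsep_def by auto
  have e2: "insert c (E - {c} - X) = E - X" using X c by blast
  have e3: "E - (E - {c} - X) = insert c X" using X c by blast
  have cEX: "card (E - X) \<ge> 2"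
  proof -
    have "E - {c} - X \<subseteq> E - X" by blast
    then have "card (E - {c} - X) \<le> card (E - X)" using finE by (intro card_mono) auto
    then show ?thesis using cY by linarith
  qed
  have XE: "X \<subseteq> E" using X by blast
  have h1: "r X + r (E - X) \<ge> r E + 2" using conn2[OF XE cX cEX] .
  have cY2: "card (E - (E - {c} - X)) \<ge> 2"
  proof -
    have "X \<subseteq> E - (E - {c} - X)" using X by blast
    then have "card X \<le> card (E - (E - {c} - X))" using finE by (intro card_mono) auto
    then show ?thesis using cX by linarith
  qed
  have YE: "E - {c} - X \<subseteq> E" by blast
  have h2: "r (E - {c} - X) + r (E - (E - {c} - X)) \<ge> r E + 2" using conn2[OF YE cY cY2] .
  then have h2': "r (E - {c} - X) + r (insert c X) \<ge> r E + 2" unfolding e3 .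
  have m1: "r X \<le> r (insert c X)" by (rule rk_mono) blast
  have m2: "r (E - {c} - X) \<le> r (E - X)" by (rule rk_mono) blast
  show "r (insert c X) = r X" using h1 s m1 by linarith
  show "r (E - X) = r (E - {c} - X)" using h2' s m2 by linarith
  show "r X + r (E - {c} - X) = r E + 2" using h1 h2' s m1 m2 by linarith
qed

lemma NT:
  assumes c: "c \<in> E" and nt: "\<not> in_triangle E indep c" and u: "u \<in> E" and v: "v \<in> E"
    and d: "c \<noteq> u" "c \<noteq> v" "u \<noteq> v"
  shows "r {c, u, v} = 3"
proof (rule ccontr)
  assume ne: "r {c, u, v} \<noteq> 3"
  have card3: "card {c, u, v} = 3" using d by auto
  have ni: "\<not> indep {c, u, v}" using indep_iff[of "{c,u,v}"] ne card3 by auto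
  have "circuit E indep {c, u, v}" unfolding circuit_def
  proof (intro conjI allI impI)
    show "{c, u, v} \<subseteq> E" using c u v by blast
    show "\<not> indep {c, u, v}" by (rule ni)
  next
    fix D assume D: "D \<subset> {c, u, v}"
    then have "D \<subseteq> {c, u} \<or> D \<subseteq> {c, v} \<or> D \<subseteq> {u, v}" by blast
    moreover have "indep {c, u}" using pair_indep c u d by blast
    moreover have "indep {c, v}" using pair_indep c v d by blast
    moreover have "indep {u, v}" using pair_indep u v d by blast
    ultimately show "indep D" using indep_sub by blast
  qed
  then have "in_triangle E indep c" unfolding in_triangle_def triangle_def using card3 by blast
  then show False using nt by blast
qed

lemma triangle_props:
  assumes "in_triangle E indep x"
  shows "\<exists>T. T \<subseteq> E \<and> card T = 3 \<and> x \<in> T \<and> triangle E indep T \<and> (\<forall>z\<in>T. r (T - {z}) = r T)"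
proof -
  obtain T where T: "circuit E indep T" "card T = 3" "x \<in> T"
    using assms unfolding in_triangle_def triangle_def by blast
  have TE: "T \<subseteq> E" and nT: "\<not> indep T" and sub: "\<forall>D. D \<subset> T \<longrightarrow> indep D"
    using T(1) unfolding circuit_def by auto
  have fT: "finite T" using T(2) card.infinite by fastforce
  have rT: "r T \<noteq> 3" using indep_iff[OF fT] nT T(2) by auto
  have "\<forall>z\<in>T. r (T - {z}) = r T"
  proof
    fix z assume z: "z \<in> T"
    have "T - {z} \<subset> T" using z by blast
    then have "indep (T - {z})" using sub by blast
    moreover have "card (T - {z}) = 2" using z T(2) fT by (simp add: card_Diff_singleton)
    ultimately have r2: "r (T - {z}) = 2" using indep_iff[of "T - {z}"] fT by simp
    have "r (T - {z}) \<le> r T" by (rule rk_mono) blast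
    moreover have "r T \<le> 3" using rk_le_card[OF fT] T(2) by simp
    ultimately show "r (T - {z}) = r T" using r2 rT by linarith
  qed
  moreover have "triangle E indep T" unfolding triangle_def using T by blast
  ultimately show ?thesis using TE T by blast
qed

lemma nonconn_vsep:
  assumes c: "c \<in> E" and nc: "\<not> n_connected 3 (E - {c}) (contract_indep indep c)"
  shows "\<exists>X. vsep c X"
proof -
  obtain k X where k: "1 \<le> k" "k < 3" and sep: "separation k (E - {c}) (contract_indep indep c) X"
    using nc unfolding n_connected_def by blast
  have X: "X \<subseteq> E - {c}" and cX: "k \<le> card X" and cY: "k \<le> card (E - {c} - X)"
    and ineq: "int (rk (contract_indep indep c) X) + int (rk (contract_indep indep c) (E - {c} - X))
        - int (rk (contract_indep indep c) (E - {c})) < int k"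
    using sep unfolding separation_def by auto
  have ic: "indep {c}" using single_indep c by blast
  have rc1: "\<And>Z. r (insert c Z) \<ge> 1"
  proof -
    fix Z have "r {c} \<le> r (insert c Z)" by (rule rk_mono) blast
    then show "r (insert c Z) \<ge> 1" using rk_single c by simp
  qed
  have cX': "c \<notin> X" using X by blast
  have k1: "rk (contract_indep indep c) X = r (insert c X) - 1" using rk_contract[OF ic cX'] .
  have cY': "c \<notin> E - {c} - X" by blast
  have k2: "rk (contract_indep indep c) (E - {c} - X) = r (insert c (E - {c} - X)) - 1"
    using rk_contract[OF ic cY'] .
  have cE': "c \<notin> E - {c}" by blast
  have k3: "rk (contract_indep indep c) (E - {c}) = r (insert c (E - {c})) - 1"
    using rk_contract[OF ic cE'] .
  have e1: "insert c (E - {c} - X) = E - X" using X c by blast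
  have e2: "insert c (E - {c}) = E" using c by blast
  have main: "r (insert c X) + r (E - X) \<le> r E + k"
    using ineq k1 k2 k3 rc1[of X] rc1[of "E - {c} - X"] rc1[of "E - {c}"] unfolding e1 e2 by linarith
  have cE: "card (E - {c}) = card E - 1" using c finE by (simp add: card_Diff_singleton)
  have cXY: "card X + card (E - {c} - X) = card E - 1"
  proof -
    have "card (E - {c} - X) = card (E - {c}) - card X" using X finE by (simp add: card_Diff_subset finite_subset)
    moreover have "card X \<le> card (E - {c})" using X finE by (intro card_mono) auto
    ultimately show ?thesis using cE by linarith
  qed
  have m1: "r X \<le> r (insert c X)" by (rule rk_mono) blast
  have m2: "r (E - {c} - X) \<le> r (E - X)" by (rule rk_mono) blast
  show ?thesis
  proof (cases "k = 2")
    case True then show ?thesis using X cX cY main unfolding vsep_def by auto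
  next
    case False
    then have k1': "k = 1" using k by linarith
    show ?thesis
    proof (cases "card X \<ge> 2")
      case True
      have cc: "card (E - X) \<ge> 2"
      proof -
        have "card (E - X) = card (insert c (E - {c} - X))" using e1 by simp
        also have "\<dots> = card (E - {c} - X) + 1" using finE by (simp add: finite_subset)
        finally show ?thesis using cY k1' by linarith
      qed
      have XE: "X \<subseteq> E" using X by blast
      have "r X + r (E - X) \<ge> r E + 2" using conn2[OF XE True cc] .
      then show ?thesis using main m1 k1' by linarith
    next
      case False
      then have cY2: "card (E - {c} - X) \<ge> 2" using cXY cardE by linarith
      have e3: "E - (E - {c} - X) = insert c X" using X c by blast
      have cc: "card (E - (E - {c} - X)) \<ge> 2"
      proof -
        have fX: "finite X" using X finE finite_subset by blast
        have "c \<notin> X" using X by blast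
        then have "card (insert c X) = card X + 1" using fX by simp
        then show ?thesis unfolding e3 using cX k1' by linarith
      qed
      have YE: "E - {c} - X \<subseteq> E" by blast
      have "r (E - {c} - X) + r (E - (E - {c} - X)) \<ge> r E + 2" using conn2[OF YE cY2 cc] .
      then show ?thesis unfolding e3 using main m2 k1' by linarith
    qed
  qed
qed

lemma vsep_conn:
  assumes c: "c \<in> E" and nv: "\<And>X. \<not> vsep c X"
  shows "n_connected 3 (E - {c}) (contract_indep indep c)"
  using nonconn_vsep[OF c] nv by blast

lemma vsep_card3:
  assumes c: "c \<in> E" and nt: "\<not> in_triangle E indep c" and v: "vsep c X"
  shows "card X \<ge> 3"
proof (rule ccontr)
  assume "\<not> card X \<ge> 3"
  moreover have "card X \<ge> 2" using v unfolding vsep_def by blast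
  ultimately have "card X = 2" by linarith
  then obtain u w where uw: "X = {u, w}" "u \<noteq> w" by (meson card_2_iff)
  have X: "X \<subseteq> E - {c}" using v unfolding vsep_def by blast
  have "r {c, u, w} = 3" using NT[OF c nt] X uw by blast
  moreover have "r (insert c X) = r X" using vsepD[OF c v] by blast
  moreover have "r X \<le> 2" using rk_le_card[of X] uw by simp
  ultimately show False using uw by simp
qed


lemma F3:
  assumes e: "e \<in> Cs" and nte: "\<not> in_triangle E indep e" and v: "vsep e X" and x: "X \<inter> Cs = {x}"
  shows "r (insert x (E - {e} - X)) = r (E - {e} - X) + 1"
proof -
  have eE: "e \<in> E" using e CsE by blast
  define Y where "Y = E - {e} - X"
  define A where "A = X - {x}"
  have X: "X \<subseteq> E - {e}" using v unfolding vsep_def by blast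
  have xX: "x \<in> X" using x by blast
  have xCs: "x \<in> Cs" using x by blast
  have AH: "A \<subseteq> E - Cs" using X x unfolding A_def by blast
  have XA: "insert x A = X" using xX unfolding A_def by blast
  have rA: "r X = r A + 1" using cocircuit_CC[OF cc xCs AH] unfolding XA .
  have c3: "card X \<ge> 3" using vsep_card3[OF eE nte v] .
  have fX: "finite X" using X finE finite_subset by blast
  have cA: "card A \<ge> 2" using c3 fX xX unfolding A_def by (simp add: card_Diff_singleton)
  note D = vsepD[OF eE v]
  show ?thesis unfolding Y_def[symmetric]
  proof (rule ccontr)
    assume ne: "r (insert x Y) \<noteq> r Y + 1"
    have "r Y \<le> r (insert x Y)" by (rule rk_mono) blast
    moreover have "r (insert x Y) \<le> r Y + 1" by (rule rk_insert)
    ultimately have eqx: "r (insert x Y) = r Y" using ne by linarith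
    have EX: "E - X = insert e Y" using X eE unfolding Y_def by blast
    have eqe: "r (insert e Y) = r Y" using D(2) unfolding EX Y_def .
    have "r (insert x (insert e Y)) = r (insert e Y)" using cl_mono[OF eqx subset_insertI] .
    then have rEA0: "r (insert x (insert e Y)) = r Y" using eqe by simp
    have EA: "E - A = insert x (insert e Y)" using X xX eE unfolding A_def Y_def by blast
    have AE: "A \<subseteq> E" using AH by blast
    have xe: "x \<noteq> e" using X xX by blast
    have "{x, e} \<subseteq> E - A" using EA by blast
    then have "card {x, e} \<le> card (E - A)" by (rule card_mono[OF finite_Diff[OF finE]])
    then have cEA: "card (E - A) \<ge> 2" using xe by simp
    have "r A + r (E - A) \<ge> r E + 2" using conn2[OF AE cA cEA] .
    then show False using rEA0 EA rA D(3) unfolding Y_def by simp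
  qed
qed

lemma L4:
  assumes e: "e \<in> Cs" and xC: "x \<in> Cs" and nte: "\<not> in_triangle E indep e"
    and ntx: "\<not> in_triangle E indep x"
    and v: "vsep e X" and x: "X \<inter> Cs = {x}"
  shows "\<not> vsep x X'"
proof
  assume v': "vsep x X'"
  have eE: "e \<in> E" using e CsE by blast
  have xE: "x \<in> E" using xC CsE by blast
  have X: "X \<subseteq> E - {e}" using v unfolding vsep_def by blast
  have xX: "x \<in> X" using x by blast
  have xe: "x \<noteq> e" using X xX by blast
  obtain X0 where v0: "vsep x X0" and eX0: "e \<notin> X0"
  proof (cases "e \<in> X'")
    case True
    have "vsep x (E - {x} - X')" using vsep_sym[OF xE v'] .
    moreover have "e \<notin> E - {x} - X'" using True by blast
    ultimately show ?thesis using that by blast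
  next
    case False then show ?thesis using that v' by blast
  qed
  have X0: "X0 \<subseteq> E - {x}" using v0 unfolding vsep_def by blast
  define Y where "Y = E - {e} - X"
  define A where "A = X - {x}"
  define Y' where "Y' = E - {x} - X0"
  define A1 where "A1 = A \<inter> X0"
  define A2 where "A2 = A \<inter> Y'"
  define Y1 where "Y1 = Y \<inter> X0"
  define Y2 where "Y2 = Y \<inter> Y'"
  have eY': "e \<in> Y'" using eE xe eX0 unfolding Y'_def by blast
  note De = vsepD[OF eE v]
  note Dx = vsepD[OF xE v0]
  have AH: "A \<subseteq> E - Cs" using X x unfolding A_def by blast
  have XA: "insert x A = X" using xX unfolding A_def by blast
  have rA: "r X = r A + 1" using cocircuit_CC[OF cc xC AH] unfolding XA .
  have F: "r (insert x Y) = r Y + 1" using F3[OF e nte v x] unfolding Y_def .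
  have cX: "card X \<ge> 3" using vsep_card3[OF eE nte v] .
  have cY: "card Y \<ge> 3" using vsep_card3[OF eE nte vsep_sym[OF eE v]] unfolding Y_def .
  have cX0: "card X0 \<ge> 3" using vsep_card3[OF xE ntx v0] .
  have cY': "card Y' \<ge> 3" using vsep_card3[OF xE ntx vsep_sym[OF xE v0]] unfolding Y'_def .
  have fE: "finite E" by (rule finE)
  have fA: "finite A" using X fE unfolding A_def by (meson finite_Diff finite_subset Diff_subset subset_trans)
  have fY: "finite Y" using fE unfolding Y_def by simp
  have fX0: "finite X0" using X0 fE finite_subset by blast
  have fY': "finite Y'" using fE unfolding Y'_def by simp
  have fA1: "finite A1" "finite A2" "finite Y1" "finite Y2"
    using fA fY unfolding A1_def A2_def Y1_def Y2_def by auto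
  have cA: "card A = card X - 1" using xX unfolding A_def by (simp add: card_Diff_singleton)
  have uA: "A = A1 \<union> A2" "A1 \<inter> A2 = {}" using X X0 xe unfolding A_def A1_def A2_def Y'_def by blast+
  have uY: "Y = Y1 \<union> Y2" "Y1 \<inter> Y2 = {}" using xX unfolding Y_def Y1_def Y2_def Y'_def by blast+
  have uX0: "X0 = A1 \<union> Y1" "A1 \<inter> Y1 = {}" using X0 eX0 unfolding A_def A1_def Y1_def Y_def by blast+
  have uY': "Y' = insert e (A2 \<union> Y2)" "e \<notin> A2 \<union> Y2" "A2 \<inter> Y2 = {}"
    using eY' X unfolding A_def A2_def Y2_def Y_def Y'_def by blast+
  have kA: "card A = card A1 + card A2" using card_Un_disjoint[OF fA1(1) fA1(2) uA(2)] uA(1) by simp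
  have kY: "card Y = card Y1 + card Y2" using card_Un_disjoint[OF fA1(3) fA1(4) uY(2)] uY(1) by simp
  have kX0: "card X0 = card A1 + card Y1" using card_Un_disjoint[OF fA1(1) fA1(3) uX0(2)] uX0(1) by simp
  have kY': "card Y' = card A2 + card Y2 + 1"
  proof -
    have "card (A2 \<union> Y2) = card A2 + card Y2" using card_Un_disjoint[OF fA1(2) fA1(4) uY'(3)] .
    moreover have "finite (A2 \<union> Y2)" using fA1 by simp
    ultimately show ?thesis using uY'(1,2) by simp
  qed
  have EX0: "E - X0 = insert x Y'" using X0 xE unfolding Y'_def by blast
  have EX: "E - X = insert e Y" using X eE unfolding Y_def by blast
  have rEX0: "r (insert x Y') = r Y'" using Dx(2) unfolding EX0 Y'_def .
  have rEX: "r (insert e Y) = r Y" using De(2) unfolding EX Y_def .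
  have sX: "r X + r Y = r E + 2" using De(3) unfolding Y_def .
  have sX0: "r X0 + r Y' = r E + 2" using Dx(3) unfolding Y'_def .
  have AE: "A \<subseteq> E" using AH by blast
  have subs: "A1 \<subseteq> E" "A2 \<subseteq> E" "Y1 \<subseteq> E" "Y2 \<subseteq> E"
    using AE unfolding A1_def A2_def Y1_def Y2_def Y_def by blast+
  have cmp: "\<And>Z W. W \<subseteq> E - Z \<Longrightarrow> card W \<le> card (E - Z)"
    using fE by (intro card_mono) auto
  have xA: "x \<notin> A" unfolding A_def by blast
  have eA: "e \<notin> A" using X unfolding A_def by blast
  have xY: "x \<notin> Y" using xX unfolding Y_def by blast
  have eY: "e \<notin> Y" unfolding Y_def by blast
  have AY: "A \<inter> Y = {}" unfolding A_def Y_def by blast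
  have EXe: "E - {e} = insert x (A \<union> Y)" using X xX unfolding A_def Y_def by auto
  have EXx: "E - {x} = X0 \<union> Y'" "X0 \<inter> Y' = {}" using X0 unfolding Y'_def by auto
  have p1: False if h1: "card A2 \<ge> 2" and h2: "card Y1 \<ge> 2"
  proof -
    have i1a: "A \<inter> (E - X0) = A2" unfolding EX0 A2_def using xA by auto
    have i1b: "A \<union> (E - X0) = E - Y1"
    proof
      show "A \<union> (E - X0) \<subseteq> E - Y1" using AE AY unfolding Y1_def by auto
      show "E - Y1 \<subseteq> A \<union> (E - X0)"
      proof
        fix z assume z: "z \<in> E - Y1"
        show "z \<in> A \<union> (E - X0)"
        proof (cases "z \<in> X0")
          case True
          then have "z \<notin> Y" using z unfolding Y1_def by auto
          moreover have "z \<noteq> e" "z \<noteq> x" using True eX0 X0 by auto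
          ultimately show ?thesis using z EXe by auto
        qed (use z in auto)
      qed
    qed
    have i2a: "insert x X0 \<inter> (E - X) = Y1" unfolding EX Y1_def using xY xe eX0 by auto
    have i2b: "insert x X0 \<union> (E - X) = E - A2"
    proof
      have YE: "Y \<subseteq> E" unfolding Y_def by blast
      show "insert x X0 \<union> (E - X) \<subseteq> E - A2" using xE X0 EXx(2) eE eA xA AY YE unfolding EX A2_def by auto
      show "E - A2 \<subseteq> insert x X0 \<union> (E - X)"
      proof
        fix z assume z: "z \<in> E - A2"
        show "z \<in> insert x X0 \<union> (E - X)"
        proof (cases "z \<in> A")
          case True
          then have "z \<notin> Y'" using z unfolding A2_def by auto
          then show ?thesis using EXx(1) z by auto
        next
          case False
          then have "z \<notin> X \<or> z = x" using XA by auto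
          then show ?thesis using z by auto
        qed
      qed
    qed
    have sm1: "r (A \<union> (E - X0)) + r (A \<inter> (E - X0)) \<le> r A + r (E - X0)" by (rule submod)
    have sm2: "r (insert x X0 \<union> (E - X)) + r (insert x X0 \<inter> (E - X)) \<le> r (insert x X0) + r (E - X)"
      by (rule submod)
    have "Y \<subseteq> E - A2" using AY unfolding Y_def A2_def by auto
    then have "card Y \<le> card (E - A2)" by (rule cmp)
    then have c1: "card (E - A2) \<ge> 2" using cY by linarith
    have "A \<subseteq> E - Y1" using AY AE unfolding Y1_def by auto
    then have "card A \<le> card (E - Y1)" by (rule cmp)
    then have c2: "card (E - Y1) \<ge> 2" using cA cX by linarith
    have k1: "r A2 + r (E - A2) \<ge> r E + 2" using conn2[OF subs(2) h1 c1] .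
    have k2: "r Y1 + r (E - Y1) \<ge> r E + 2" using conn2[OF subs(3) h2 c2] .
    have q1: "r (E - Y1) + r A2 \<le> r A + r (E - X0)" using sm1 unfolding i1a i1b .
    have q2: "r (E - A2) + r Y1 \<le> r (insert x X0) + r (E - X)" using sm2 unfolding i2a i2b .
    have rr: "r (E - X0) = r Y'" "r (E - X) = r Y" using rEX0 rEX unfolding EX0 EX by auto
    show False using q1 q2 rr Dx(1) k1 k2 rA sX sX0 by linarith
  qed
  have p2: False if h1: "card A1 \<ge> 2" and h2: "card Y2 \<ge> 2"
  proof -
    have i1a: "A \<inter> insert x X0 = A1" unfolding A1_def using xA by auto
    have i1b: "insert e (A \<union> insert x X0) = E - Y2"
    proof
      show "insert e (A \<union> insert x X0) \<subseteq> E - Y2" using AE AY eE xE X0 eY xY EXx(2) unfolding Y2_def by auto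
      show "E - Y2 \<subseteq> insert e (A \<union> insert x X0)"
      proof
        fix z assume z: "z \<in> E - Y2"
        show "z \<in> insert e (A \<union> insert x X0)"
        proof (cases "z \<in> Y")
          case True
          then have "z \<notin> Y'" using z unfolding Y2_def by auto
          moreover have "z \<noteq> x" using True xY by auto
          ultimately show ?thesis using EXx(1) z by auto
        next
          case False
          then show ?thesis using z EXe by auto
        qed
      qed
    qed
    have sub: "X \<subseteq> A \<union> insert x X0" using XA by blast
    have cl: "r (insert e (A \<union> insert x X0)) = r (A \<union> insert x X0)" using cl_mono[OF De(1) sub] .
    have i2a: "(E - X0) \<inter> (E - X) = insert e Y2" unfolding EX0 EX Y2_def using eY' xY xe by auto
    have i2b: "(E - X0) \<union> (E - X) = E - A1"
    proof
      show "(E - X0) \<union> (E - X) \<subseteq> E - A1" using xA unfolding A1_def A_def by auto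
      show "E - A1 \<subseteq> (E - X0) \<union> (E - X)"
      proof
        fix z assume z: "z \<in> E - A1"
        show "z \<in> (E - X0) \<union> (E - X)"
        proof (cases "z \<in> X")
          case True
          then have "z \<in> A \<or> z = x" using XA by auto
          then show ?thesis using z X0 unfolding A1_def by auto
        qed (use z in auto)
      qed
    qed
    have sm1: "r (A \<union> insert x X0) + r (A \<inter> insert x X0) \<le> r A + r (insert x X0)" by (rule submod)
    have sm2: "r ((E - X0) \<union> (E - X)) + r ((E - X0) \<inter> (E - X)) \<le> r (E - X0) + r (E - X)"
      by (rule submod)
    have m: "r Y2 \<le> r (insert e Y2)" by (rule rk_mono) blast
    have "Y \<subseteq> E - A1" using AY unfolding Y_def A1_def by auto
    then have "card Y \<le> card (E - A1)" by (rule cmp)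
    then have c1: "card (E - A1) \<ge> 2" using cY by linarith
    have "A \<subseteq> E - Y2" using AY AE unfolding Y2_def by auto
    then have "card A \<le> card (E - Y2)" by (rule cmp)
    then have c2: "card (E - Y2) \<ge> 2" using cA cX by linarith
    have k1: "r A1 + r (E - A1) \<ge> r E + 2" using conn2[OF subs(1) h1 c1] .
    have k2: "r Y2 + r (E - Y2) \<ge> r E + 2" using conn2[OF subs(4) h2 c2] .
    have q0: "r (E - Y2) = r (A \<union> insert x X0)" using cl unfolding i1b .
    have q1: "r (E - Y2) + r A1 \<le> r A + r (insert x X0)" using sm1 unfolding i1a q0[symmetric] .
    have q2: "r (E - A1) + r (insert e Y2) \<le> r (E - X0) + r (E - X)" using sm2 unfolding i2a i2b .
    have rr: "r (E - X0) = r Y'" "r (E - X) = r Y" using rEX0 rEX unfolding EX0 EX by auto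
    show False using q1 q2 rr Dx(1) k1 k2 rA sX sX0 m by linarith
  qed
  have pa: False if h1: "card A1 = 1" and h2: "card A2 = 1"
  proof -
    obtain p where p: "A1 = {p}" using h1 card_1_singletonE by blast
    obtain q where q: "A2 = {q}" using h2 card_1_singletonE by blast
    have pq: "p \<noteq> q" using uA(2) p q by blast
    have qY': "q \<in> Y'" using q unfolding A2_def by blast
    have pX0: "p \<in> X0" using p unfolding A1_def by blast
    have Xeq: "X = {x, p, q}" using XA uA(1) p q by blast
    have qE: "q \<in> E" "p \<in> E" using subs p q by blast+
    have qd: "e \<noteq> q" "q \<noteq> x" "p \<noteq> x" using q p X xX unfolding A2_def A1_def A_def by blast+
    have r3: "r {e, q, x} = 3" using NT[OF eE nte qE(1) xE qd(1) xe[symmetric] qd(2)] .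
    have fX: "finite X" using Xeq by simp
    have "r X \<le> card X" using rk_le_card[OF fX] .
    moreover have "card X \<le> 3" unfolding Xeq by (simp add: card_insert_le_m1)
    ultimately have rX3: "r X \<le> 3" by linarith
    have ie: "insert p {e, q, x} = insert e X" using Xeq by blast
    have "r {e, q, x} \<le> r (insert p {e, q, x})" by (rule rk_mono) blast
    then have eqp: "r (insert p {e, q, x}) = r {e, q, x}" using De(1) rX3 r3 unfolding ie by linarith
    have sub: "{e, q, x} \<subseteq> insert x Y'" using eY' qY' by blast
    have cl: "r (insert p (insert x Y')) = r (insert x Y')" using cl_mono[OF eqp sub] .
    have Y1eq: "Y1 = X0 - {p}" using uX0 p by blast
    have vY1: "vsep x Y1" unfolding vsep_def
    proof (intro conjI)
      show "Y1 \<subseteq> E - {x}" using X0 Y1eq by blast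
      have "card Y1 = card X0 - 1" using Y1eq pX0 by (simp add: card_Diff_singleton)
      then show "2 \<le> card Y1" using cX0 by linarith
      have "Y' \<subseteq> E - {x} - Y1" using X0 Y1eq unfolding Y'_def by blast
      then have "card Y' \<le> card (E - {x} - Y1)" using fE by (intro card_mono) auto
      then show "2 \<le> card (E - {x} - Y1)" using cY' by linarith
      have e1: "E - Y1 = insert p (insert x Y')" using X0 xE pX0 Y1eq unfolding Y'_def by blast
      have "r (insert x Y1) \<le> r (insert x X0)" by (rule rk_mono) (use Y1eq in blast)
      then show "r (insert x Y1) + r (E - Y1) \<le> r E + 2" using e1 cl rEX0 Dx(1) sX0 by simp
    qed
    have "r (insert x Y1) = r Y1" using vsepD(1)[OF xE vY1] .
    moreover have "Y1 \<subseteq> Y" unfolding Y1_def by blast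
    ultimately have "r (insert x Y) = r Y" by (rule cl_mono)
    then show False using F by simp
  qed
  have pb: False if h1: "card A2 = 1" and h2: "card Y2 = 1"
  proof -
    obtain q where q: "A2 = {q}" using h1 card_1_singletonE by blast
    obtain w where w: "Y2 = {w}" using h2 card_1_singletonE by blast
    have Y'eq: "Y' = {e, q, w}" using uY'(1) q w by blast
    have qA: "q \<in> A" using q unfolding A2_def by blast
    have wY: "w \<in> Y" using w unfolding Y2_def by blast
    have qE: "q \<in> E" "w \<in> E" using AE qA wY unfolding Y_def by blast+
    have d: "e \<noteq> q" "e \<noteq> w" "q \<noteq> w" "q \<noteq> x" using qA wY X xX unfolding A_def Y_def by blast+
    have r3: "r {e, q, w} = 3" using NT[OF eE nte qE(1) qE(2) d(1) d(2) d(3)] .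
    have r3x: "r {e, q, x} = 3" using NT[OF eE nte qE(1) xE d(1) xe[symmetric] d(4)] .
    have rY'3: "r (insert x Y') = 3" using rEX0 r3 Y'eq by simp
    have ie: "insert w {e, q, x} = insert x Y'" using Y'eq by blast
    have eqw: "r (insert w {e, q, x}) = r {e, q, x}" using rY'3 r3x unfolding ie by simp
    have sub: "{e, q, x} \<subseteq> insert e X" using qA xX unfolding A_def by blast
    have cl: "r (insert w (insert e X)) = r (insert e X)" using cl_mono[OF eqw sub] .
    define Xw where "Xw = insert w X"
    have YmW: "E - {e} - Xw = Y - {w}" unfolding Xw_def Y_def by blast
    have vXw: "vsep e Xw" unfolding vsep_def
    proof (intro conjI)
      show "Xw \<subseteq> E - {e}" using X wY unfolding Xw_def Y_def by blast
      have "card X \<le> card Xw" unfolding Xw_def using fE X by (intro card_mono) (auto intro: finite_subset)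
      then show "2 \<le> card Xw" using cX by linarith
      have "card (Y - {w}) = card Y - 1" using wY by (simp add: card_Diff_singleton)
      then show "2 \<le> card (E - {e} - Xw)" unfolding YmW using cY by linarith
      have "r (E - Xw) \<le> r (E - X)" by (rule rk_mono) (unfold Xw_def, blast)
      then show "r (insert e Xw) + r (E - Xw) \<le> r E + 2"
        using cl De(1) De(2) sX unfolding Xw_def Y_def by (simp add: insert_commute)
    qed
    have e1: "E - Xw = insert e (Y - {w})" using X eE d(2) unfolding Xw_def Y_def by blast
    have "r (E - Xw) = r (E - {e} - Xw)" using vsepD(2)[OF eE vXw] .
    then have eqe: "r (insert e (Y - {w})) = r (Y - {w})" unfolding e1 YmW .
    have "Y - {w} \<subseteq> X0" using uY w unfolding Y1_def by blast
    then have rX0e: "r (insert e X0) = r X0" by (rule cl_mono[OF eqe])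
    have "r (insert x (insert e X0)) = r (insert e X0)" using cl_mono[OF Dx(1) subset_insertI] .
    moreover have "insert x (insert e X0) = E - {q, w}" using X0 xE Y'eq d unfolding Y'_def by blast
    ultimately have "r (E - {q, w}) = r X0" using rX0e by simp
    moreover have "r (E - {q, w}) = r E" using spanE2 qE by blast
    ultimately show False using sX0 r3 Y'eq by simp
  qed
  have c1: "card A1 + card A2 \<ge> 2" using kA cA cX by linarith
  have c2: "card Y1 + card Y2 \<ge> 3" using kY cY by linarith
  have c3: "card A1 + card Y1 \<ge> 3" using kX0 cX0 by linarith
  have c4: "card A2 + card Y2 \<ge> 2" using kY' cY' by linarith
  show False
  proof (cases "card A2 \<ge> 2")
    case True
    show False
    proof (cases "card Y1 \<ge> 2")
      case True then show False using p1 \<open>card A2 \<ge> 2\<close> by blast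
    next
      case False then show False using p2 c2 c3 by linarith
    qed
  next
    case False
    then have "card A2 = 0 \<or> card A2 = 1" by linarith
    then show False
    proof
      assume a0: "card A2 = 0"
      then show False using p2 c1 c4 by linarith
    next
      assume a1: "card A2 = 1"
      show False
      proof (cases "card Y2 = 1")
        case True then show False using pb a1 by blast
      next
        case False
        then have y2: "card Y2 \<ge> 2" using c4 a1 by linarith
        show False
        proof (cases "card A1 = 1")
          case True then show False using pa a1 by blast
        next
          case False
          then have "card A1 \<ge> 2" using c1 a1 by linarith
          then show False using p2 y2 by blast
        qed
      qed
    qed
  qed
qed


lemma main_loc:
  assumes aC: "c1 \<in> Cs" and bC: "c2 \<in> Cs" and ab: "c1 \<noteq> c2"
    and nta: "\<not> in_triangle E indep c1" and ntb: "\<not> in_triangle E indep c2"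
  shows "\<exists>c\<in>Cs. n_connected 3 (E - {c}) (contract_indep indep c)"
proof (cases "\<exists>X. vsep c1 X")
  case False
  have aE: "c1 \<in> E" using aC CsE by blast
  have "n_connected 3 (E - {c1}) (contract_indep indep c1)"
    by (rule vsep_conn[OF aE]) (use False in blast)
  then show ?thesis using aC by blast
next
  case True
  have aE: "c1 \<in> E" using aC CsE by blast
  have bE: "c2 \<in> E" using bC CsE by blast
  have fCs: "finite Cs" using finE CsE finite_subset by blast
  obtain X0 where v0: "vsep c1 X0" using True by blast
  have nonempty: "Z \<inter> Cs \<noteq> {}" if vZ: "vsep c1 Z" for Z
  proof
    assume em: "Z \<inter> Cs = {}"
    have "Z \<subseteq> E - Cs" using vZ em unfolding vsep_def by blast
    then have "r (insert c1 Z) = r Z + 1" using cocircuit_CC[OF cc aC] by blast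
    moreover have "r (insert c1 Z) = r Z" using vsepD(1)[OF aE vZ] .
    ultimately show False by simp
  qed
  obtain X x where vX: "vsep c1 X" and Xx: "X \<inter> Cs = {x}"
  proof -
    define Y0 where "Y0 = E - {c1} - X0"
    have vY0: "vsep c1 Y0" unfolding Y0_def using vsep_sym[OF aE v0] .
    have X0: "X0 \<subseteq> E - {c1}" using v0 unfolding vsep_def by blast
    have un: "Cs - {c1} = (X0 \<inter> Cs) \<union> (Y0 \<inter> Cs)" using X0 CsE unfolding Y0_def by blast
    have dj: "(X0 \<inter> Cs) \<inter> (Y0 \<inter> Cs) = {}" unfolding Y0_def by blast
    have "card (Cs - {c1}) = 3" using card4 aC by (simp add: card_Diff_singleton)
    then have k: "card (X0 \<inter> Cs) + card (Y0 \<inter> Cs) = 3"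
      using card_Un_disjoint[of "X0 \<inter> Cs" "Y0 \<inter> Cs"] fCs un dj by simp
    have k1: "card (X0 \<inter> Cs) \<ge> 1" using nonempty[OF v0] fCs by (simp add: Suc_leI card_gt_0_iff)
    have k2: "card (Y0 \<inter> Cs) \<ge> 1" using nonempty[OF vY0] fCs by (simp add: Suc_leI card_gt_0_iff)
    show ?thesis
    proof (cases "card (X0 \<inter> Cs) = 1")
      case True
      then obtain x where "X0 \<inter> Cs = {x}" using card_1_singletonE by blast
      then show ?thesis using that v0 by blast
    next
      case False
      then have "card (Y0 \<inter> Cs) = 1" using k k1 k2 by linarith
      then obtain x where "Y0 \<inter> Cs = {x}" using card_1_singletonE by blast
      then show ?thesis using that vY0 by blast
    qed
  qed
  have X: "X \<subseteq> E - {c1}" using vX unfolding vsep_def by blast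
  have xC: "x \<in> Cs" using Xx by blast
  have xX: "x \<in> X" using Xx by blast
  have xE: "x \<in> E" using xC CsE by blast
  show ?thesis
  proof (cases "in_triangle E indep x")
    case False
    have "n_connected 3 (E - {x}) (contract_indep indep x)"
      by (rule vsep_conn[OF xE]) (rule L4[OF aC xC nta False vX Xx])
    then show ?thesis using xC by blast
  next
    case True
    obtain T where T: "T \<subseteq> E" "card T = 3" "x \<in> T" "triangle E indep T"
      and rT: "\<forall>z\<in>T. r (T - {z}) = r T" using triangle_props[OF True] by blast
    have intri: "\<And>z. z \<in> T \<Longrightarrow> in_triangle E indep z" using T(4) unfolding in_triangle_def by blast
    have fT: "finite T" using T(1) finE finite_subset by blast
    obtain w where w: "w \<in> T" "w \<in> Cs" "w \<noteq> x"
    proof (rule ccontr)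
      assume "\<not> thesis"
      then have "\<forall>w\<in>T. w \<in> Cs \<longrightarrow> w = x" using that by blast
      then have sub: "T - {x} \<subseteq> E - Cs" using T(1) by blast
      have "r (insert x (T - {x})) = r (T - {x}) + 1" using cocircuit_CC[OF cc xC sub] .
      moreover have "insert x (T - {x}) = T" using T(3) by blast
      moreover have "r (T - {x}) = r T" using rT T(3) by blast
      ultimately show False by simp
    qed
    have wt: "in_triangle E indep w" using intri[OF w(1)] .
    have wa: "w \<noteq> c1" using wt nta by blast
    have wb: "w \<noteq> c2" using wt ntb by blast
    have xb: "x \<noteq> c2" using True ntb by blast
    have xa: "x \<noteq> c1" using X xX by blast
    have Cseq: "Cs = {c1, c2, x, w}"
    proof -
      have s: "{c1, c2, x, w} \<subseteq> Cs" using aC bC xC w(2) by blast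
      have "card {c1, c2, x, w} = 4" using ab wa wb xb xa w(3) by auto
      then show ?thesis using card_subset_eq[OF fCs s] card4 by simp
    qed
    define Y where "Y = E - {c1} - X"
    have vY: "vsep c1 Y" unfolding Y_def using vsep_sym[OF aE vX] .
    have "Y \<inter> Cs = Cs - {c1} - {x}" using CsE Xx unfolding Y_def by blast
    then have YC: "Y \<inter> Cs = {c2, w}" unfolding Cseq using ab wa wb xb xa w(3) by auto
    have cY: "card Y \<ge> 3" using vsep_card3[OF aE nta vY] .
    have F: "r (insert x Y) = r Y + 1" using F3[OF aC nta vX Xx] unfolding Y_def .
    have xwT: "{x, w} \<subseteq> T" using T(3) w(1) by blast
    have "card (T - {x, w}) = card T - card {x, w}" using card_Diff_subset[OF _ xwT] fT finite_subset[OF xwT fT] by simp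
    then have "card (T - {x, w}) = 1" using T(2) w(3) by simp
    then obtain t where t: "T - {x, w} = {t}" using card_1_singletonE by blast
    have Teq: "T = {x, w, t}" using t T(3) w(1) by blast
    have tx: "t \<noteq> x" "t \<noteq> w" using t by blast+
    have tT: "t \<in> T" using t by blast
    have ta: "t \<noteq> c1" using intri[OF tT] nta by blast
    have tE: "t \<in> E" using t T(1) by blast
    have wY: "w \<in> Y" using YC by blast
    show ?thesis
    proof (cases "t \<in> Y")
      case True
      have e1: "T - {x} = {w, t}" using Teq tx w(3) by blast
      have "insert x {w, t} = T" using Teq by blast
      moreover have "r (T - {x}) = r T" using rT T(3) by blast
      ultimately have "r (insert x {w, t}) = r {w, t}" using e1 by simp
      moreover have "{w, t} \<subseteq> Y" using True wY by blast
      ultimately have "r (insert x Y) = r Y" by (rule cl_mono)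
      then show ?thesis using F by simp
    next
      case False
      then have tX: "t \<in> X" using tE ta unfolding Y_def by blast
      have e1: "T - {w} = {x, t}" using Teq tx w(3) by blast
      have eqw: "r (insert w {x, t}) = r {x, t}"
      proof -
        have "insert w {x, t} = T" using Teq by blast
        moreover have "r (T - {w}) = r T" using rT w(1) by blast
        ultimately show ?thesis using e1 by simp
      qed
      have sub: "{x, t} \<subseteq> insert c1 X" using xX tX by blast
      have cl: "r (insert w (insert c1 X)) = r (insert c1 X)" using cl_mono[OF eqw sub] .
      note D = vsepD[OF aE vX]
      define Xw where "Xw = insert w X"
      have YmW: "E - {c1} - Xw = Y - {w}" unfolding Xw_def Y_def by blast
      have vXw: "vsep c1 Xw" unfolding vsep_def
      proof (intro conjI)
        show "Xw \<subseteq> E - {c1}" using X wY unfolding Xw_def Y_def by blast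
        have "card X \<le> card Xw" unfolding Xw_def using finE X by (intro card_mono) (auto intro: finite_subset)
        moreover have "card X \<ge> 3" using vsep_card3[OF aE nta vX] .
        ultimately show "2 \<le> card Xw" by linarith
        have "card (Y - {w}) = card Y - 1" using wY by (simp add: card_Diff_singleton)
        then show "2 \<le> card (E - {c1} - Xw)" unfolding YmW using cY by linarith
        have "r (E - Xw) \<le> r (E - X)" by (rule rk_mono) (unfold Xw_def, blast)
        then show "r (insert c1 Xw) + r (E - Xw) \<le> r E + 2"
          using cl D unfolding Xw_def by (simp add: insert_commute)
      qed
      define Y0 where "Y0 = E - {c1} - Xw"
      have vY0: "vsep c1 Y0" unfolding Y0_def using vsep_sym[OF aE vXw] .
      have Y0C: "Y0 \<inter> Cs = {c2}" using YC wb unfolding Y0_def YmW by blast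
      have "n_connected 3 (E - {c2}) (contract_indep indep c2)"
        by (rule vsep_conn[OF bE]) (rule L4[OF aC bC nta ntb vY0 Y0C])
      then show ?thesis using bC by blast
    qed
  qed
qed

end

theorem lemma4p5:
  fixes E :: "'a set" and indep :: "'a set \<Rightarrow> bool" and Cs :: "'a set" and c1 c2 :: 'a
  assumes "matroid E indep"
    and "n_connected 3 E indep"
    and "cocircuit E indep Cs" and "card Cs = 4"
    and "c1 \<in> Cs" and "c2 \<in> Cs" and "c1 \<noteq> c2"
    and "\<not> in_triangle E indep c1" and "\<not> in_triangle E indep c2"
  shows "\<exists>c \<in> Cs. n_connected 3 (E - {c}) (contract_indep indep c)"
proof -
  have "m3 E indep Cs" unfolding m3_def m3_axioms_def mat_def using assms(1-4) by blast
  then interpret m3 E indep Cs .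
  show ?thesis using main_loc[OF assms(5-9)] .
qed

end
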